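(* Let $\mathcal{R}$ be a left-linear TRS and suppose $s$ strongly $p$-converges to $t$ in $\mathcal{R}$. Then there is a term $t'$ with $t\le_\bot t'$ such that $s$ weakly $p$-converges to $t'$ in $\mathcal{R}$.
   Context: Partial terms over $\Sigma_\bot=\Sigma\uplus\{\bot\}$ ordered by $\le_\bot$ ($s\le_\bot t$ iff $s$ is $t$ with some subterms replaced by $\bot$) form a complete semilattice; $\liminf_{\iota\to\alpha}a_\iota=\bigvee_{\beta<\alpha}\bigwedge_{\beta\le\iota<\alpha}a_\iota$. For a reduction $S=(t_\iota\to_{\pi_\iota}t_{\iota+1})_{\iota<\alpha}$: it weakly $p$-converges to $t$ if $\liminf_{\iota\to\lambda}t_\iota=t_\lambda$ for every limit $\lambda<\alpha$ and $t=\liminf_{\iota\to\hat\alpha}t_\iota$ ($\hat\alpha=\alpha+1$ if closed, so $t$ is the last term, $\hat\alpha=\alpha$ if open). With contexts $c_\iota$ ($t_\iota$ with position $\pi_\iota$ replaced by $\bot$), it strongly $p$-converges to $t$ if $\liminf_{\iota\to\lambda}c_\iota=t_\lambda$ for every limit $\lambda<\alpha$ and $t$ is the last term (closed) or $t=\liminf_{\iota\to\alpha}c_\iota$ (open). *)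

theory Defs
  imports Main
begin

text \<open>Possibly infinite partial terms over an (unranked) signature extended by
  the constant Bot, with variables.\<close>
codatatype ('f, 'v) pterm = PVar 'v | PFun 'f "('f, 'v) pterm list" | PBot

type_synonym pos = "nat list"

coinductive le_bot :: "('f, 'v) pterm \<Rightarrow> ('f, 'v) pterm \<Rightarrow> bool" where
  le_bot_Bot: "le_bot PBot t"
| le_bot_Var: "le_bot (PVar x) (PVar x)"
| le_bot_Fun: "list_all2 le_bot ss ts \<Longrightarrow> le_bot (PFun f ss) (PFun f ts)"

primrec subt :: "('f, 'v) pterm \<Rightarrow> pos \<Rightarrow> ('f, 'v) pterm option" where
  "subt t [] = Some t"
| "subt t (i # p) = (case t of
      PFun f ts \<Rightarrow> (if i < length ts then subt (ts ! i) p else None)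
    | _ \<Rightarrow> None)"

primrec repl :: "('f, 'v) pterm \<Rightarrow> pos \<Rightarrow> ('f, 'v) pterm \<Rightarrow> ('f, 'v) pterm" where
  "repl t [] u = u"
| "repl t (i # p) u = (case t of
      PFun f ts \<Rightarrow> (if i < length ts then PFun f (ts[i := repl (ts ! i) p u]) else t)
    | _ \<Rightarrow> t)"

coinductive inst :: "('v \<Rightarrow> ('f, 'v) pterm) \<Rightarrow> ('f, 'v) pterm \<Rightarrow> ('f, 'v) pterm \<Rightarrow> bool"
  for \<sigma> where
  inst_Var: "inst \<sigma> (PVar x) (\<sigma> x)"
| inst_Fun: "list_all2 (inst \<sigma>) ls us \<Longrightarrow> inst \<sigma> (PFun f ls) (PFun f us)"

definition vars :: "('f, 'v) pterm \<Rightarrow> 'v set" where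
  "vars t = {x. \<exists>p. subt t p = Some (PVar x)}"

definition bot_free :: "('f, 'v) pterm \<Rightarrow> bool" where
  "bot_free t \<longleftrightarrow> (\<forall>p. subt t p \<noteq> Some PBot)"

definition linear :: "('f, 'v) pterm \<Rightarrow> bool" where
  "linear t \<longleftrightarrow> (\<forall>x p q. subt t p = Some (PVar x) \<longrightarrow> subt t q = Some (PVar x) \<longrightarrow> p = q)"

definition trs :: "(('f, 'v) pterm \<times> ('f, 'v) pterm) set \<Rightarrow> bool" where
  "trs R \<longleftrightarrow> (\<forall>(l, r) \<in> R. bot_free l \<and> bot_free r \<and> (\<forall>x. l \<noteq> PVar x) \<and> vars r \<subseteq> vars l)"

definition left_linear :: "(('f, 'v) pterm \<times> ('f, 'v) pterm) set \<Rightarrow> bool" where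
  "left_linear R \<longleftrightarrow> (\<forall>(l, r) \<in> R. linear l)"

definition rstep :: "(('f, 'v) pterm \<times> ('f, 'v) pterm) set \<Rightarrow> ('f, 'v) pterm \<Rightarrow> pos \<Rightarrow> ('f, 'v) pterm \<Rightarrow> bool" where
  "rstep R t \<pi> t' \<longleftrightarrow> (\<exists>(l, r) \<in> R. \<exists>\<sigma> u v.
     subt t \<pi> = Some u \<and> inst \<sigma> l u \<and> inst \<sigma> r v \<and> t' = repl t \<pi> v)"

definition glb :: "('f, 'v) pterm set \<Rightarrow> ('f, 'v) pterm" where
  "glb A = (THE x. (\<forall>a\<in>A. le_bot x a) \<and> (\<forall>y. (\<forall>a\<in>A. le_bot y a) \<longrightarrow> le_bot y x))"

definition lub :: "('f, 'v) pterm set \<Rightarrow> ('f, 'v) pterm" where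
  "lub A = (THE x. (\<forall>a\<in>A. le_bot a x) \<and> (\<forall>y. (\<forall>a\<in>A. le_bot a y) \<longrightarrow> le_bot x y))"

text \<open>Ordinals are represented by elements of a well-ordered index type.\<close>
definition idx0 :: "'i::wellorder" where
  "idx0 = (LEAST i. True)"

definition isucc :: "'i::wellorder \<Rightarrow> 'i" where
  "isucc i = (LEAST j. i < j)"

definition is_limit :: "'i::wellorder \<Rightarrow> bool" where
  "is_limit l \<longleftrightarrow> l \<noteq> idx0 \<and> (\<forall>b<l. \<exists>c. b < c \<and> c < l)"

definition liminf_at :: "('i::wellorder \<Rightarrow> ('f, 'v) pterm) \<Rightarrow> 'i \<Rightarrow> ('f, 'v) pterm" where
  "liminf_at a l = lub {glb {a i | i. b \<le> i \<and> i < l} | b. b < l}"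

definition reduction :: "(('f, 'v) pterm \<times> ('f, 'v) pterm) set \<Rightarrow> 'i::wellorder \<Rightarrow>
    ('i \<Rightarrow> ('f, 'v) pterm) \<Rightarrow> ('i \<Rightarrow> pos) \<Rightarrow> bool" where
  "reduction R \<alpha> ts ps \<longleftrightarrow> (\<forall>i<\<alpha>. rstep R (ts i) (ps i) (ts (isucc i)))"

text \<open>The reduction is closed iff alpha is not a limit ordinal (zero or successor);
  then the final term is ts alpha.\<close>
definition weak_conv :: "'i::wellorder \<Rightarrow> ('i \<Rightarrow> ('f, 'v) pterm) \<Rightarrow> ('f, 'v) pterm \<Rightarrow> bool" where
  "weak_conv \<alpha> ts t \<longleftrightarrow>
     (\<forall>l<\<alpha>. is_limit l \<longrightarrow> liminf_at ts l = ts l) \<and>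
     t = (if is_limit \<alpha> then liminf_at ts \<alpha> else ts \<alpha>)"

definition strong_conv :: "'i::wellorder \<Rightarrow> ('i \<Rightarrow> ('f, 'v) pterm) \<Rightarrow> ('i \<Rightarrow> pos) \<Rightarrow> ('f, 'v) pterm \<Rightarrow> bool" where
  "strong_conv \<alpha> ts ps t \<longleftrightarrow>
     (\<forall>l<\<alpha>. is_limit l \<longrightarrow> liminf_at (\<lambda>i. repl (ts i) (ps i) PBot) l = ts l) \<and>
     t = (if is_limit \<alpha> then liminf_at (\<lambda>i. repl (ts i) (ps i) PBot) \<alpha> else ts \<alpha>)"

definition weakly_p_converges :: "(('f, 'v) pterm \<times> ('f, 'v) pterm) set \<Rightarrow> 'i::wellorder itself \<Rightarrow>
    ('f, 'v) pterm \<Rightarrow> ('f, 'v) pterm \<Rightarrow> bool" where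
  "weakly_p_converges R _ s t \<longleftrightarrow>
     (\<exists>(\<alpha>::'i) ts ps. reduction R \<alpha> ts ps \<and> ts idx0 = s \<and> weak_conv \<alpha> ts t)"

definition strongly_p_converges :: "(('f, 'v) pterm \<times> ('f, 'v) pterm) set \<Rightarrow> 'i::wellorder itself \<Rightarrow>
    ('f, 'v) pterm \<Rightarrow> ('f, 'v) pterm \<Rightarrow> bool" where
  "strongly_p_converges R _ s t \<longleftrightarrow>
     (\<exists>(\<alpha>::'i) ts ps. reduction R \<alpha> ts ps \<and> ts idx0 = s \<and> strong_conv \<alpha> ts ps t)"

end

theory Submission
  imports Defs
begin

lemma le_bot_refl: "le_bot t t"
proof -
  show ?thesis
  proof (coinduction arbitrary: t rule: le_bot.coinduct)
    case le_bot
    then show ?case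
      by (cases t) (auto simp: list.rel_refl)
  qed
qed

lemma le_bot_Bot_iff[simp]: "le_bot t PBot \<longleftrightarrow> t = PBot"
  by (auto elim: le_bot.cases intro: le_bot.intros)

lemma le_bot_Var_iff[simp]: "le_bot (PVar x) t \<longleftrightarrow> t = PVar x"
  by (auto elim: le_bot.cases intro: le_bot.intros)

lemma le_bot_Fun_iff: "le_bot (PFun f ss) t \<longleftrightarrow> (\<exists>ts. t = PFun f ts \<and> list_all2 le_bot ss ts)"
  by (auto elim: le_bot.cases intro: le_bot.intros)

lemma le_bot_trans: "le_bot a b \<Longrightarrow> le_bot b c \<Longrightarrow> le_bot a c"
proof (coinduction arbitrary: a b c rule: le_bot.coinduct)
  case (le_bot a b c)
  show ?case
  proof (cases a)
    case (PVar x) then show ?thesis using le_bot by auto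
  next
    case PBot then show ?thesis by auto
  next
    case (PFun f ss)
    then obtain ts where b: "b = PFun f ts" "list_all2 le_bot ss ts" using le_bot by (auto simp: le_bot_Fun_iff)
    then obtain us where c: "c = PFun f us" "list_all2 le_bot ts us" using le_bot by (auto simp: le_bot_Fun_iff)
    have "list_all2 (\<lambda>x z. \<exists>y. le_bot x y \<and> le_bot y z) ss us"
      using b(2) c(2) by (auto simp: list_all2_conv_all_nth) (metis nth_mem)
    then show ?thesis using PFun b c by (auto elim: list_all2_mono)
  qed
qed

lemma le_bot_antisym: "le_bot a b \<Longrightarrow> le_bot b a \<Longrightarrow> a = b"
proof (coinduction arbitrary: a b rule: pterm.coinduct)
  case (Eq_pterm a b)
  show ?case
  proof (cases a)
    case (PVar x) then show ?thesis using Eq_pterm by auto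
  next
    case PBot then show ?thesis using Eq_pterm by auto
  next
    case (PFun f ss)
    then obtain ts where b: "b = PFun f ts" "list_all2 le_bot ss ts" using Eq_pterm by (auto simp: le_bot_Fun_iff)
    then have "list_all2 le_bot ts ss" using Eq_pterm PFun by (auto simp: le_bot_Fun_iff)
    then show ?thesis using PFun b by (auto simp: list_all2_conv_all_nth)
  qed
qed

definition args_at :: "('f, 'v) pterm set \<Rightarrow> nat \<Rightarrow> ('f, 'v) pterm set" where
  "args_at C i = {ts ! i | f ts. PFun f ts \<in> C \<and> i < length ts}"

primcorec glbc :: "('f, 'v) pterm set \<Rightarrow> ('f, 'v) pterm" where
  "glbc A = (if A \<noteq> {} \<and> (\<exists>v. A = {PVar v}) then PVar (SOME v. A = {PVar v})
     else if A \<noteq> {} \<and> (\<exists>f n. \<forall>a\<in>A. \<exists>ts. a = PFun f ts \<and> length ts = n)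
     then PFun (fst (SOME (f, n). \<forall>a\<in>A. \<exists>ts. a = PFun f ts \<and> length ts = n))
        (map (\<lambda>i. glbc (args_at A i)) [0..<snd (SOME (f, n). \<forall>a\<in>A. \<exists>ts. a = PFun f ts \<and> length ts = n)])
     else PBot)"

primcorec lubc :: "('f, 'v) pterm set \<Rightarrow> ('f, 'v) pterm" where
  "lubc C = (if \<exists>v. PVar v \<in> C then PVar (SOME v. PVar v \<in> C)
     else if \<exists>f ts. PFun f ts \<in> C
     then PFun (fst (SOME (f, ts). PFun f ts \<in> C))
        (map (\<lambda>i. lubc (args_at C i)) [0..<length (snd (SOME (f, ts). PFun f ts \<in> C))])
     else PBot)"

lemma glbc_lower: "a \<in> A \<Longrightarrow> le_bot (glbc A) a"
proof (coinduction arbitrary: a A rule: le_bot.coinduct)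
  case (le_bot a A)
  show ?case
  proof (cases "\<exists>v. A = {PVar v}")
    case True
    then show ?thesis using le_bot by (subst glbc.code) auto
  next
    case nv: False
    show ?thesis
    proof (cases "\<exists>f n. \<forall>a\<in>A. \<exists>ts. a = PFun f ts \<and> length ts = n")
      case True
      define fn where "fn = (SOME (f, n). \<forall>a\<in>A. \<exists>ts. a = PFun f ts \<and> length ts = n)"
      have "\<exists>p. (\<lambda>(f, n). \<forall>a\<in>A. \<exists>ts. a = PFun f ts \<and> length ts = n) p"
        using True by auto
      from someI_ex[OF this] have P: "\<forall>a\<in>A. \<exists>ts. a = PFun (fst fn) ts \<and> length ts = snd fn"
        unfolding fn_def by (simp add: case_prod_unfold)
      have g: "glbc A = PFun (fst fn) (map (\<lambda>i. glbc (args_at A i)) [0..<snd fn])"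
        using nv True le_bot unfolding fn_def by (subst glbc.code) auto
      obtain ts where a: "a = PFun (fst fn) ts" "length ts = snd fn" using P le_bot by blast
      have "list_all2 (\<lambda>x y. \<exists>a A. x = glbc A \<and> y = a \<and> a \<in> A) (map (\<lambda>i. glbc (args_at A i)) [0..<snd fn]) ts"
      proof (rule list_all2_all_nthI)
        fix i assume "i < length (map (\<lambda>i. glbc (args_at A i)) [0..<snd fn])"
        then have i: "i < length ts" using a by simp
        have "ts ! i \<in> args_at A i" using a le_bot i unfolding args_at_def by blast
        then show "\<exists>a' A'. map (\<lambda>i. glbc (args_at A i)) [0..<snd fn] ! i = glbc A' \<and> ts ! i = a' \<and> a' \<in> A'"
          using i a by auto
      qed (use a in simp)
      then show ?thesis using g a by (auto elim: list_all2_mono)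
    next
      case False
      then show ?thesis using nv by (subst glbc.code) auto
    qed
  qed
qed

lemma glbc_greatest: "A \<noteq> {} \<Longrightarrow> \<forall>a\<in>A. le_bot y a \<Longrightarrow> le_bot y (glbc A)"
proof (coinduction arbitrary: y A rule: le_bot.coinduct)
  case (le_bot y A)
  show ?case
  proof (cases y)
    case PBot then show ?thesis by simp
  next
    case (PVar v)
    then have "A = {PVar v}" using le_bot by auto
    then have "glbc A = PVar v" by (subst glbc.code) auto
    then show ?thesis using PVar by simp
  next
    case (PFun f ys)
    have all: "\<forall>a\<in>A. \<exists>ts. a = PFun f ts \<and> list_all2 le_bot ys ts"
      using le_bot PFun by (auto simp: le_bot_Fun_iff)
    then have ex: "\<exists>f n. \<forall>a\<in>A. \<exists>ts. a = PFun f ts \<and> length ts = n"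
      by (metis list_all2_lengthD)
    have nv: "\<not> (\<exists>v. A = {PVar v})" using all by auto
    define fn where "fn = (SOME (f, n). \<forall>a\<in>A. \<exists>ts. a = PFun f ts \<and> length ts = n)"
    have "\<exists>p. (\<lambda>(f, n). \<forall>a\<in>A. \<exists>ts. a = PFun f ts \<and> length ts = n) p"
      using ex by auto
    from someI_ex[OF this] have P: "\<forall>a\<in>A. \<exists>ts. a = PFun (fst fn) ts \<and> length ts = snd fn"
      unfolding fn_def by (simp add: case_prod_unfold)
    have g: "glbc A = PFun (fst fn) (map (\<lambda>i. glbc (args_at A i)) [0..<snd fn])"
      using nv ex le_bot unfolding fn_def by (subst glbc.code) auto
    obtain a where aA: "a \<in> A" using le_bot by auto
    obtain ts where ts: "a = PFun (fst fn) ts" "length ts = snd fn" using P aA by blast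
    obtain ts' where ts': "a = PFun f ts'" "list_all2 le_bot ys ts'" using all aA by blast
    have ff: "fst fn = f" and n: "snd fn = length ys"
      using ts ts' by (auto dest: list_all2_lengthD)
    have "list_all2 (\<lambda>y x. \<exists>y' A'. y = y' \<and> x = glbc A' \<and> A' \<noteq> {} \<and> (\<forall>a\<in>A'. le_bot y' a)) ys (map (\<lambda>i. glbc (args_at A i)) [0..<snd fn])"
    proof (rule list_all2_all_nthI)
      fix i assume "i < length ys"
      then have i: "i < length ys" .
      have il: "i < length ts" using ts ts' i by (auto dest!: list_all2_lengthD)
      have "ts ! i \<in> args_at A i" using ts il aA unfolding args_at_def by blast
      then have ne: "args_at A i \<noteq> {}" by blast
      have "\<forall>b\<in>args_at A i. le_bot (ys ! i) b"
        using all i unfolding args_at_def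
        by (auto simp: list_all2_conv_all_nth) 
      then show "\<exists>y' A'. ys ! i = y' \<and> map (\<lambda>i. glbc (args_at A i)) [0..<snd fn] ! i = glbc A' \<and> A' \<noteq> {} \<and> (\<forall>a\<in>A'. le_bot y' a)"
        using ne i n by auto
    qed (simp add: n)
    then show ?thesis using g PFun ff by (auto elim!: list_all2_mono)
  qed
qed

definition chain_le :: "('f, 'v) pterm set \<Rightarrow> bool" where
  "chain_le C \<longleftrightarrow> (\<forall>x\<in>C. \<forall>y\<in>C. le_bot x y \<or> le_bot y x)"

lemma chain_args_at: "chain_le C \<Longrightarrow> chain_le (args_at C i)"
  unfolding chain_le_def args_at_def
proof (clarsimp)
  fix f ts fa tsa
  assume a: "\<forall>x\<in>C. \<forall>y\<in>C. le_bot x y \<or> le_bot y x" "PFun f ts \<in> C" "i < length ts"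
     "PFun fa tsa \<in> C" "i < length tsa" "\<not> le_bot (tsa ! i) (ts ! i)"
  then have "le_bot (PFun f ts) (PFun fa tsa) \<or> le_bot (PFun fa tsa) (PFun f ts)" by blast
  then show "le_bot (ts ! i) (tsa ! i)" using a(3,5,6)
    by (auto simp: le_bot_Fun_iff list_all2_conv_all_nth)
qed

lemma lubc_Var: "chain_le C \<Longrightarrow> PVar v \<in> C \<Longrightarrow> lubc C = PVar v"
proof -
  assume c: "chain_le C" and v: "PVar v \<in> C"
  have "PVar (SOME v. PVar v \<in> C) \<in> C" using v by (metis someI)
  then have "(SOME v. PVar v \<in> C) = v" using c v unfolding chain_le_def by force
  then show ?thesis using v by (subst lubc.code) auto
qed

lemma lubc_Fun: "chain_le C \<Longrightarrow> PFun f ts \<in> C \<Longrightarrow>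
   lubc C = PFun f (map (\<lambda>i. lubc (args_at C i)) [0..<length ts])"
proof -
  assume c: "chain_le C" and v: "PFun f ts \<in> C"
  have nv: "\<not> (\<exists>v. PVar v \<in> C)" using c v unfolding chain_le_def by (force simp: le_bot_Fun_iff)
  define p where "p = (SOME (f, ts). PFun f ts \<in> C)"
  have "\<exists>p. (\<lambda>(f, ts). PFun f ts \<in> C) p" using v by auto
  from someI_ex[OF this] have "PFun (fst p) (snd p) \<in> C" unfolding p_def by (simp add: case_prod_unfold)
  then have "fst p = f \<and> length (snd p) = length ts" using c v unfolding chain_le_def
    by (force simp: le_bot_Fun_iff dest: list_all2_lengthD)
  then show ?thesis using nv v unfolding p_def by (subst lubc.code) auto
qed

lemma lubc_upper: "chain_le C \<Longrightarrow> x \<in> C \<Longrightarrow> le_bot x (lubc C)"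
proof (coinduction arbitrary: x C rule: le_bot.coinduct)
  case (le_bot x C)
  show ?case
  proof (cases x)
    case PBot then show ?thesis by simp
  next
    case (PVar v) then show ?thesis using le_bot lubc_Var by auto
  next
    case (PFun f ts)
    have g: "lubc C = PFun f (map (\<lambda>i. lubc (args_at C i)) [0..<length ts])"
      using lubc_Fun le_bot PFun by auto
    have "list_all2 (\<lambda>x y. \<exists>x' C'. x = x' \<and> y = lubc C' \<and> chain_le C' \<and> x' \<in> C') ts (map (\<lambda>i. lubc (args_at C i)) [0..<length ts])"
    proof (rule list_all2_all_nthI)
      fix i assume "i < length ts"
      then have i: "i < length ts" .
      have "ts ! i \<in> args_at C i" using le_bot PFun i unfolding args_at_def by blast
      then show "\<exists>x' C'. ts ! i = x' \<and> map (\<lambda>i. lubc (args_at C i)) [0..<length ts] ! i = lubc C' \<and> chain_le C' \<and> x' \<in> C'"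
        using i le_bot chain_args_at by auto
    qed simp
    then show ?thesis using g PFun by (auto elim!: list_all2_mono)
  qed
qed

lemma lubc_least: "chain_le C \<Longrightarrow> \<forall>c\<in>C. le_bot c y \<Longrightarrow> le_bot (lubc C) y"
proof (coinduction arbitrary: y C rule: le_bot.coinduct)
  case (le_bot y C)
  show ?case
  proof (cases "\<exists>v. PVar v \<in> C")
    case True
    then obtain v where v: "PVar v \<in> C" by blast
    then have "y = PVar v" using le_bot(2) by auto
    moreover have "lubc C = PVar v" using lubc_Var[OF le_bot(1) v] .
    ultimately show ?thesis by simp
  next
    case nv: False
    show ?thesis
    proof (cases "\<exists>f ts. PFun f ts \<in> C")
      case True
      then obtain f ts where v: "PFun f ts \<in> C" by blast
      have g: "lubc C = PFun f (map (\<lambda>i. lubc (args_at C i)) [0..<length ts])"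
        using lubc_Fun[OF le_bot(1) v] .
      have "le_bot (PFun f ts) y" by (rule le_bot(2)[rule_format, OF v])
      then obtain ys where ys: "y = PFun f ys" "list_all2 le_bot ts ys" unfolding le_bot_Fun_iff by blast
      have "list_all2 (\<lambda>x y. \<exists>y' C'. y = y' \<and> x = lubc C' \<and> chain_le C' \<and> (\<forall>c\<in>C'. le_bot c y')) (map (\<lambda>i. lubc (args_at C i)) [0..<length ts]) ys"
      proof (rule list_all2_all_nthI)
        fix i assume "i < length (map (\<lambda>i. lubc (args_at C i)) [0..<length ts])"
        then have i: "i < length ts" by simp
        have "\<forall>c\<in>args_at C i. le_bot c (ys ! i)"
        proof
          fix c assume "c \<in> args_at C i"
          then obtain f' ts' where c: "c = ts' ! i" "PFun f' ts' \<in> C" "i < length ts'" unfolding args_at_def by blast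
          then have "le_bot (PFun f' ts') y" by (intro le_bot(2)[rule_format])
          then have "le_bot (PFun f' ts') (PFun f ys)" using ys(1) by simp
          then have "list_all2 le_bot ts' ys" by (simp add: le_bot_Fun_iff)
          then show "le_bot c (ys ! i)" using c by (auto simp: list_all2_conv_all_nth)
        qed
        then show "\<exists>y' C'. ys ! i = y' \<and> map (\<lambda>i. lubc (args_at C i)) [0..<length ts] ! i = lubc C' \<and> chain_le C' \<and> (\<forall>c\<in>C'. le_bot c y')"
          using i chain_args_at[OF le_bot(1), of i] by (intro exI[of _ "ys ! i"] exI[of _ "args_at C i"]) simp
      next
        show "length (map (\<lambda>i. lubc (args_at C i)) [0..<length ts]) = length ys"
          using ys(2) by (simp add: list_all2_lengthD)
      qed
      then show ?thesis using g ys by (auto elim!: list_all2_mono)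
    next
      case False
      then have "lubc C = PBot" using nv by (subst lubc.code) auto
      then show ?thesis by simp
    qed
  qed
qed

lemma glb_eq: "A \<noteq> {} \<Longrightarrow> glb A = glbc A"
  unfolding glb_def
proof (rule the_equality)
  assume A: "A \<noteq> {}"
  show "(\<forall>a\<in>A. le_bot (glbc A) a) \<and> (\<forall>y. (\<forall>a\<in>A. le_bot y a) \<longrightarrow> le_bot y (glbc A))"
    using A glbc_lower glbc_greatest by blast
  fix x assume x: "(\<forall>a\<in>A. le_bot x a) \<and> (\<forall>y. (\<forall>a\<in>A. le_bot y a) \<longrightarrow> le_bot y x)"
  have "le_bot x (glbc A)" using x A glbc_greatest by blast
  moreover have "le_bot (glbc A) x" using x glbc_lower by blast
  ultimately show "x = glbc A" by (rule le_bot_antisym)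
qed

lemma lub_eq: "chain_le C \<Longrightarrow> lub C = lubc C"
  unfolding lub_def
proof (rule the_equality)
  assume A: "chain_le C"
  show "(\<forall>a\<in>C. le_bot a (lubc C)) \<and> (\<forall>y. (\<forall>a\<in>C. le_bot a y) \<longrightarrow> le_bot (lubc C) y)"
    using A lubc_upper lubc_least by blast
  fix x assume x: "(\<forall>a\<in>C. le_bot a x) \<and> (\<forall>y. (\<forall>a\<in>C. le_bot a y) \<longrightarrow> le_bot x y)"
  have "le_bot (lubc C) x" using x A lubc_least by blast
  moreover have "le_bot x (lubc C)" using x A lubc_upper by blast
  ultimately show "x = lubc C" by (rule le_bot_antisym[symmetric])
qed

lemma glbc_anti: "A \<noteq> {} \<Longrightarrow> B \<subseteq> A \<Longrightarrow> B \<noteq> {} \<Longrightarrow> le_bot (glbc A) (glbc B)"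
  by (meson glbc_greatest glbc_lower subsetD)

lemma glbc_tail_mono:
  fixes a :: "'i::wellorder \<Rightarrow> ('f, 'v) pterm"
  assumes bc: "b \<le> c" and c: "c < l"
  shows "le_bot (glbc {a i | i. b \<le> i \<and> i < l}) (glbc {a i | i. c \<le> i \<and> i < l})"
proof (rule glbc_greatest)
  have "a c \<in> {a i | i. c \<le> i \<and> i < l}" using c by blast
  then show "{a i | i. c \<le> i \<and> i < l} \<noteq> {}" by blast
  show "\<forall>x\<in>{a i | i. c \<le> i \<and> i < l}. le_bot (glbc {a i | i. b \<le> i \<and> i < l}) x"
  proof
    fix x assume "x \<in> {a i | i. c \<le> i \<and> i < l}"
    then obtain i where i: "x = a i" "c \<le> i" "i < l" by blast
    then have "b \<le> i" using bc by simp
    then have "x \<in> {a i | i. b \<le> i \<and> i < l}" using i by blast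
    then show "le_bot (glbc {a i | i. b \<le> i \<and> i < l}) x" by (rule glbc_lower)
  qed
qed

lemma liminf_chain:
  fixes a :: "'i::wellorder \<Rightarrow> ('f, 'v) pterm"
  shows "chain_le {glbc {a i | i. b \<le> i \<and> i < l} | b. b < l}"
  unfolding chain_le_def
proof (intro ballI)
  fix x y assume "x \<in> {glbc {a i | i. b \<le> i \<and> i < l} | b. b < l}" "y \<in> {glbc {a i | i. b \<le> i \<and> i < l} | b. b < l}"
  then obtain b c where b: "x = glbc {a i | i. b \<le> i \<and> i < l}" "b < l"
    and c: "y = glbc {a i | i. c \<le> i \<and> i < l}" "c < l" by blast
  show "le_bot x y \<or> le_bot y x"
  proof (cases "b \<le> c")
    case True
    then show ?thesis using glbc_tail_mono[OF True c(2), of a] b c by simp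
  next
    case False
    then have cb: "c \<le> b" by simp
    show ?thesis using glbc_tail_mono[OF cb b(2), of a] b c by simp
  qed
qed

lemma liminf_eq:
  fixes a :: "'i::wellorder \<Rightarrow> ('f, 'v) pterm"
  shows "liminf_at a l = lubc {glbc {a i | i. b \<le> i \<and> i < l} | b. b < l}"
proof -
  have e: "\<And>b. b < l \<Longrightarrow> glb {a i | i. b \<le> i \<and> i < l} = glbc {a i | i. b \<le> i \<and> i < l}"
  proof -
    fix b assume "b < l"
    then have "a b \<in> {a i | i. b \<le> i \<and> i < l}" by blast
    then have "{a i | i. b \<le> i \<and> i < l} \<noteq> {}" by blast
    then show "glb {a i | i. b \<le> i \<and> i < l} = glbc {a i | i. b \<le> i \<and> i < l}" by (rule glb_eq)
  qed
  have "{glb {a i | i. b \<le> i \<and> i < l} | b. b < l} = {glbc {a i | i. b \<le> i \<and> i < l} | b. b < l}"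
  proof (rule Collect_cong)
    fix x
    show "(\<exists>b. x = glb {a i | i. b \<le> i \<and> i < l} \<and> b < l) \<longleftrightarrow> (\<exists>b. x = glbc {a i | i. b \<le> i \<and> i < l} \<and> b < l)"
    proof
      assume "\<exists>b. x = glb {a i | i. b \<le> i \<and> i < l} \<and> b < l"
      then obtain b where "x = glb {a i | i. b \<le> i \<and> i < l}" "b < l" by blast
      then show "\<exists>b. x = glbc {a i | i. b \<le> i \<and> i < l} \<and> b < l" using e[of b] by (intro exI[of _ b]) auto
    next
      assume "\<exists>b. x = glbc {a i | i. b \<le> i \<and> i < l} \<and> b < l"
      then obtain b where "x = glbc {a i | i. b \<le> i \<and> i < l}" "b < l" by blast
      then show "\<exists>b. x = glb {a i | i. b \<le> i \<and> i < l} \<and> b < l" using e[of b] by (intro exI[of _ b]) auto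
    qed
  qed
  then have "liminf_at a l = lub {glbc {a i | i. b \<le> i \<and> i < l} | b. b < l}"
    unfolding liminf_at_def by simp
  also have "\<dots> = lubc {glbc {a i | i. b \<le> i \<and> i < l} | b. b < l}"
    by (rule lub_eq[OF liminf_chain])
  finally show ?thesis .
qed

lemma liminf_mono:
  fixes a b :: "'i::wellorder \<Rightarrow> ('f, 'v) pterm"
  assumes "\<And>i. i < l \<Longrightarrow> le_bot (a i) (b i)"
  shows "le_bot (liminf_at a l) (liminf_at b l)"
  unfolding liminf_eq
proof (rule lubc_least[OF liminf_chain], clarify)
  fix c :: 'i assume c: "c < l"
  have "le_bot (glbc {a i | i. c \<le> i \<and> i < l}) (glbc {b i | i. c \<le> i \<and> i < l})"
  proof (rule glbc_greatest)
    show "{b i | i. c \<le> i \<and> i < l} \<noteq> {}" using c by blast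
    show "\<forall>x\<in>{b i | i. c \<le> i \<and> i < l}. le_bot (glbc {a i | i. c \<le> i \<and> i < l}) x"
    proof clarify
      fix i assume i: "c \<le> i" "i < l"
      have "le_bot (glbc {a i | i. c \<le> i \<and> i < l}) (a i)" using i by (intro glbc_lower) blast
      then show "le_bot (glbc {a i | i. c \<le> i \<and> i < l}) (b i)" using le_bot_trans[OF _ assms[OF i(2)]] by blast
    qed
  qed
  moreover have "le_bot (glbc {b i | i. c \<le> i \<and> i < l}) (lubc {glbc {b i | i. d \<le> i \<and> i < l} | d. d < l})"
    using c by (intro lubc_upper[OF liminf_chain]) blast
  ultimately show "le_bot (glbc {a i | i. c \<le> i \<and> i < l}) (lubc {glbc {b i | i. d \<le> i \<and> i < l} | d. d < l})"
    by (rule le_bot_trans)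
qed

lemma repl_bot_le: "le_bot (repl t p PBot) t"
proof (induction p arbitrary: t)
  case Nil then show ?case by (simp add: le_bot.intros)
next
  case (Cons i p)
  show ?case
  proof (cases t)
    case (PFun f ts)
    show ?thesis
    proof (cases "i < length ts")
      case True
      have "list_all2 le_bot (ts[i := repl (ts ! i) p PBot]) ts"
      proof (rule list_all2_all_nthI)
        fix k assume "k < length (ts[i := repl (ts ! i) p PBot])"
        then show "le_bot (ts[i := repl (ts ! i) p PBot] ! k) (ts ! k)"
          using Cons.IH le_bot_refl True by (cases "k = i") auto
      qed simp
      then show ?thesis using PFun True by (auto intro: le_bot.intros)
    qed (use PFun le_bot_refl in auto)
  qed (auto intro: le_bot_refl)
qed

lemma subt_mono: "subt t p = Some u \<Longrightarrow> le_bot t t' \<Longrightarrow> \<exists>u'. subt t' p = Some u' \<and> le_bot u u'"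
proof (induction p arbitrary: t t')
  case Nil then show ?case by simp
next
  case (Cons i p)
  then obtain f ts where t: "t = PFun f ts" "i < length ts" "subt (ts ! i) p = Some u"
    by (auto split: pterm.splits if_splits)
  then obtain ts' where t': "t' = PFun f ts'" "list_all2 le_bot ts ts'" using Cons.prems(2) by (auto simp: le_bot_Fun_iff)
  then have "le_bot (ts ! i) (ts' ! i)" "i < length ts'" using t(2) by (auto simp: list_all2_conv_all_nth)
  then show ?case using Cons.IH[OF t(3)] t' by simp
qed

lemma repl_mono: "subt t p \<noteq> None \<Longrightarrow> le_bot t t' \<Longrightarrow> le_bot v v' \<Longrightarrow> le_bot (repl t p v) (repl t' p v')"
proof (induction p arbitrary: t t')
  case Nil then show ?case by simp
next
  case (Cons i p)
  then obtain f ts where t: "t = PFun f ts" "i < length ts" "subt (ts ! i) p \<noteq> None"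
    by (auto split: pterm.splits if_splits)
  then obtain ts' where t': "t' = PFun f ts'" "list_all2 le_bot ts ts'" using Cons.prems(2) by (auto simp: le_bot_Fun_iff)
  then have le: "le_bot (ts ! i) (ts' ! i)" and i': "i < length ts'" using t(2) by (auto simp: list_all2_conv_all_nth)
  have "le_bot (repl (ts ! i) p v) (repl (ts' ! i) p v')" using Cons.IH[OF t(3) le Cons.prems(3)] .
  then have "list_all2 le_bot (ts[i := repl (ts ! i) p v]) (ts'[i := repl (ts' ! i) p v'])"
    using t'(2) by (simp add: list_all2_update_cong)
  then show ?case using t t' i' by (simp add: le_bot.intros)
qed

lemma subt_snoc: "subt t (p @ [i]) = (case subt t p of Some (PFun f ts) \<Rightarrow> if i < length ts then Some (ts ! i) else None | _ \<Rightarrow> None)"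
proof (induction p arbitrary: t)
  case Nil then show ?case by (simp split: pterm.splits)
next
  case (Cons j p)
  then show ?case by (simp split: pterm.splits)
qed

lemma inst_subt: "inst \<sigma> l u \<Longrightarrow> subt l p = Some l0 \<Longrightarrow> \<exists>u0. subt u p = Some u0 \<and> inst \<sigma> l0 u0"
proof (induction p arbitrary: l u)
  case Nil then show ?case by simp
next
  case (Cons i p)
  then obtain f ls where l: "l = PFun f ls" "i < length ls" "subt (ls ! i) p = Some l0"
    by (auto split: pterm.splits if_splits)
  then obtain us where u: "u = PFun f us" "list_all2 (inst \<sigma>) ls us" using Cons.prems(1) by (auto elim: inst.cases)
  then have "inst \<sigma> (ls ! i) (us ! i)" "i < length us" using l(2) by (auto simp: list_all2_conv_all_nth)
  then show ?case using Cons.IH[OF _ l(3)] u by simp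
qed

lemma match_lift:
  assumes lin: "linear l" and m: "inst \<sigma> l u" and le: "le_bot u u'"
  shows "\<exists>\<sigma>'. inst \<sigma>' l u' \<and> (\<forall>x\<in>vars l. le_bot (\<sigma> x) (\<sigma>' x))"
proof -
  define \<sigma>' where "\<sigma>' x = (if \<exists>p. subt l p = Some (PVar x)
      then the (subt u' (SOME p. subt l p = Some (PVar x))) else \<sigma> x)" for x
  have var: "\<sigma>' x = u0'" if "subt l p = Some (PVar x)" "subt u' p = Some u0'" for x p u0'
  proof -
    have "subt l (SOME p. subt l p = Some (PVar x)) = Some (PVar x)" using that(1) by (rule someI)
    then have "(SOME p. subt l p = Some (PVar x)) = p" using lin that(1) unfolding linear_def by blast
    then show ?thesis using that unfolding \<sigma>'_def by auto
  qed
  have gen: "inst \<sigma>' l1 v1" if "\<exists>p u0. subt l p = Some l1 \<and> subt u p = Some u0 \<and> subt u' p = Some v1 \<and> inst \<sigma> l1 u0 \<and> le_bot u0 v1" for l1 v1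
  using that
    proof (coinduction arbitrary: l1 v1 rule: inst.coinduct)
      case (inst l0 u0')
      then obtain p u0 where h: "subt l p = Some l0" "subt u p = Some u0" "subt u' p = Some u0'"
        "inst \<sigma> l0 u0" "le_bot u0 u0'" by blast
      show ?case
      proof (cases l0)
        case (PVar x)
        then show ?thesis using var h by auto
      next
        case PBot then show ?thesis using h(4) by (auto elim: inst.cases)
      next
        case (PFun f ls)
        then obtain us where us: "u0 = PFun f us" "list_all2 (inst \<sigma>) ls us" using h(4) by (auto elim: inst.cases)
        then obtain us' where us': "u0' = PFun f us'" "list_all2 le_bot us us'" using h(5) by (auto simp: le_bot_Fun_iff)
        have len: "length ls = length us" "length us = length us'" using us(2) us'(2) by (auto dest: list_all2_lengthD)
        have "list_all2 (\<lambda>a b. \<exists>p u0. subt l p = Some a \<and> subt u p = Some u0 \<and> subt u' p = Some b \<and> inst \<sigma> a u0 \<and> le_bot u0 b) ls us'"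
        proof (rule list_all2_all_nthI)
          fix i assume i: "i < length ls"
          have "subt l (p @ [i]) = Some (ls ! i)" using h(1) PFun i by (simp add: subt_snoc)
          moreover have "subt u (p @ [i]) = Some (us ! i)" using h(2) us(1) i len by (simp add: subt_snoc)
          moreover have "subt u' (p @ [i]) = Some (us' ! i)" using h(3) us'(1) i len by (simp add: subt_snoc)
          moreover have "inst \<sigma> (ls ! i) (us ! i)" using us(2) i by (simp add: list_all2_conv_all_nth)
          moreover have "le_bot (us ! i) (us' ! i)" using us'(2) i len by (simp add: list_all2_conv_all_nth)
          ultimately show "\<exists>p u0. subt l p = Some (ls ! i) \<and> subt u p = Some u0 \<and> subt u' p = Some (us' ! i) \<and> inst \<sigma> (ls ! i) u0 \<and> le_bot u0 (us' ! i)"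
            by blast
        qed (use len in simp)
        then show ?thesis using PFun us'(1) by (auto elim!: list_all2_mono)
      qed
    qed
  have "inst \<sigma>' l u'"
    using m le by (intro gen exI[of _ "[]"]) simp
  moreover have "\<forall>x\<in>vars l. le_bot (\<sigma> x) (\<sigma>' x)"
  proof
    fix x assume "x \<in> vars l"
    then obtain p where p: "subt l p = Some (PVar x)" unfolding vars_def by blast
    obtain u0 where u0: "subt u p = Some u0" "inst \<sigma> (PVar x) u0" using inst_subt[OF m p] by blast
    have "u0 = \<sigma> x" using u0(2) by (auto elim: inst.cases)
    obtain u0' where u0': "subt u' p = Some u0'" "le_bot u0 u0'" using subt_mono[OF u0(1) le] by blast
    show "le_bot (\<sigma> x) (\<sigma>' x)" using var[OF p u0'(1)] u0'(2) \<open>u0 = \<sigma> x\<close> by simp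
  qed
  ultimately show ?thesis by blast
qed

definition nrm :: "('v \<Rightarrow> ('f, 'v) pterm) \<Rightarrow> ('f, 'v) pterm + ('f, 'v) pterm \<Rightarrow> ('f, 'v) pterm + ('f, 'v) pterm" where
  "nrm \<sigma> z = (case z of Inl (PVar x) \<Rightarrow> Inr (\<sigma> x) | _ \<Rightarrow> z)"

definition unsum :: "'a + 'a \<Rightarrow> 'a" where "unsum z = (case z of Inl a \<Rightarrow> a | Inr a \<Rightarrow> a)"

primcorec sbst :: "('v \<Rightarrow> ('f, 'v) pterm) \<Rightarrow> ('f, 'v) pterm + ('f, 'v) pterm \<Rightarrow> ('f, 'v) pterm" where
  "sbst \<sigma> z = (if is_PVar (unsum (nrm \<sigma> z)) then PVar (un_PVar (unsum (nrm \<sigma> z)))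
     else if is_PFun (unsum (nrm \<sigma> z)) then PFun (un_PFun1 (unsum (nrm \<sigma> z)))
        (map (\<lambda>t. sbst \<sigma> (if isl (nrm \<sigma> z) then Inl t else Inr t)) (un_PFun2 (unsum (nrm \<sigma> z))))
     else PBot)"

lemma sbst_Inr: "sbst \<sigma> (Inr t) = t"
proof -
  have "\<exists>t. a = sbst \<sigma> (Inr t) \<and> b = t \<Longrightarrow> a = b" for a b
  proof (coinduction arbitrary: a b rule: pterm.coinduct)
    case (Eq_pterm a b)
    then obtain t where t: "a = sbst \<sigma> (Inr t)" "b = t" by blast
    show ?case
    proof (cases t)
      case (PVar x) then show ?thesis using t by (subst (asm) sbst.code) (simp add: nrm_def unsum_def)
    next
      case PBot then show ?thesis using t by (subst (asm) sbst.code) (simp add: nrm_def unsum_def)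
    next
      case (PFun f ts)
      have "a = PFun f (map (\<lambda>t. sbst \<sigma> (Inr t)) ts)" using t PFun by (subst (asm) sbst.code) (simp add: nrm_def unsum_def)
      then show ?thesis using t PFun by (auto simp: list.rel_map intro!: list.rel_refl)
    qed
  qed
  then show ?thesis by blast
qed

lemma sbst_Var: "sbst \<sigma> (Inl (PVar x)) = \<sigma> x"
proof -
  have "sbst \<sigma> (Inl (PVar x)) = sbst \<sigma> (Inr (\<sigma> x))"
    by (subst (1 2) sbst.code) (simp add: nrm_def)
  then show ?thesis by (simp add: sbst_Inr)
qed

lemma sbst_Fun: "sbst \<sigma> (Inl (PFun f ts)) = PFun f (map (\<lambda>t. sbst \<sigma> (Inl t)) ts)"
  by (subst sbst.code) (simp add: nrm_def unsum_def)

lemma sbst_Bot: "sbst \<sigma> (Inl PBot) = PBot"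
  by (subst sbst.code) (simp add: nrm_def unsum_def)

lemma inst_lift:
  assumes m: "inst \<sigma> r v" and le: "\<forall>x\<in>vars r. le_bot (\<sigma> x) (\<sigma>' x)"
  shows "inst \<sigma>' r (sbst \<sigma>' (Inl r)) \<and> le_bot v (sbst \<sigma>' (Inl r))"
proof
  have gen: "inst \<sigma>' l1 w" if "\<exists>p v0. subt r p = Some l1 \<and> inst \<sigma> l1 v0 \<and> w = sbst \<sigma>' (Inl l1)" for l1 w
    using that
  proof (coinduction arbitrary: l1 w rule: inst.coinduct)
    case (inst l1 w)
    then obtain p v0 where h: "subt r p = Some l1" "inst \<sigma> l1 v0" "w = sbst \<sigma>' (Inl l1)" by blast
    show ?case
    proof (cases l1)
      case (PVar x) then show ?thesis using h by (simp add: sbst_Var)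
    next
      case PBot then show ?thesis using h(2) by (auto elim: inst.cases)
    next
      case (PFun f ls)
      then obtain vs where vs: "v0 = PFun f vs" "list_all2 (inst \<sigma>) ls vs" using h(2) by (auto elim: inst.cases)
      have "list_all2 (\<lambda>a b. \<exists>p v0. subt r p = Some a \<and> inst \<sigma> a v0 \<and> b = sbst \<sigma>' (Inl a)) ls (map (\<lambda>t. sbst \<sigma>' (Inl t)) ls)"
      proof (rule list_all2_all_nthI)
        fix i assume i: "i < length ls"
        have "subt r (p @ [i]) = Some (ls ! i)" using h(1) PFun i by (simp add: subt_snoc)
        moreover have "inst \<sigma> (ls ! i) (vs ! i)" using vs(2) i by (simp add: list_all2_conv_all_nth)
        ultimately show "\<exists>p v0. subt r p = Some (ls ! i) \<and> inst \<sigma> (ls ! i) v0 \<and> map (\<lambda>t. sbst \<sigma>' (Inl t)) ls ! i = sbst \<sigma>' (Inl (ls ! i))"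
          using i by auto
      qed simp
      then show ?thesis using PFun h(3) by (auto simp: sbst_Fun elim!: list_all2_mono)
    qed
  qed
  show "inst \<sigma>' r (sbst \<sigma>' (Inl r))" using m by (intro gen exI[of _ "[]"]) auto
  have gen2: "le_bot v0 w" if "\<exists>p l1. subt r p = Some l1 \<and> inst \<sigma> l1 v0 \<and> w = sbst \<sigma>' (Inl l1)" for v0 w
    using that
  proof (coinduction arbitrary: v0 w rule: le_bot.coinduct)
    case (le_bot v0 w)
    then obtain p l1 where h: "subt r p = Some l1" "inst \<sigma> l1 v0" "w = sbst \<sigma>' (Inl l1)" by blast
    show ?case
    proof (cases l1)
      case (PVar x)
      then have v0: "v0 = \<sigma> x" and w: "w = \<sigma>' x" using h by (auto elim: inst.cases simp: sbst_Var)
      have "x \<in> vars r" using h(1) PVar unfolding vars_def by blast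
      then have "le_bot (\<sigma> x) (\<sigma>' x)" using le by blast
      then show ?thesis unfolding v0 w
        by (cases rule: le_bot.cases) (auto elim!: list_all2_mono)
    next
      case PBot then show ?thesis using h(2) by (auto elim: inst.cases)
    next
      case (PFun f ls)
      then obtain vs where vs: "v0 = PFun f vs" "list_all2 (inst \<sigma>) ls vs" using h(2) by (auto elim: inst.cases)
      have len: "length ls = length vs" using vs(2) by (rule list_all2_lengthD)
      have "list_all2 (\<lambda>a b. \<exists>p l1. subt r p = Some l1 \<and> inst \<sigma> l1 a \<and> b = sbst \<sigma>' (Inl l1)) vs (map (\<lambda>t. sbst \<sigma>' (Inl t)) ls)"
      proof (rule list_all2_all_nthI)
        fix i assume i': "i < length vs"
        then have i: "i < length ls" using len by simp
        have "subt r (p @ [i]) = Some (ls ! i)" using h(1) PFun i by (simp add: subt_snoc)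
        moreover have "inst \<sigma> (ls ! i) (vs ! i)" using vs(2) i by (simp add: list_all2_conv_all_nth)
        ultimately show "\<exists>p l1. subt r p = Some l1 \<and> inst \<sigma> l1 (vs ! i) \<and> map (\<lambda>t. sbst \<sigma>' (Inl t)) ls ! i = sbst \<sigma>' (Inl l1)"
          using i by auto
      qed (simp add: len)
      then show ?thesis using PFun h(3) vs(1) by (auto simp: sbst_Fun elim!: list_all2_mono)
    qed
  qed
  show "le_bot v (sbst \<sigma>' (Inl r))" using m by (intro gen2 exI[of _ "[]"]) auto
qed

lemma rstep_lift:
  assumes trs: "trs R" and ll: "left_linear R" and st: "rstep R t \<pi> t1" and le: "le_bot t t'"
  shows "\<exists>t1'. rstep R t' \<pi> t1' \<and> le_bot t1 t1'"
proof -
  obtain l r \<sigma> u v where lr: "(l, r) \<in> R" and h: "subt t \<pi> = Some u" "inst \<sigma> l u" "inst \<sigma> r v" "t1 = repl t \<pi> v"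
    using st unfolding rstep_def by blast
  have lin: "linear l" using ll lr unfolding left_linear_def by blast
  have vr: "vars r \<subseteq> vars l" using trs lr unfolding trs_def by blast
  obtain u' where u': "subt t' \<pi> = Some u'" "le_bot u u'" using subt_mono[OF h(1) le] by blast
  obtain \<sigma>' where s': "inst \<sigma>' l u'" "\<forall>x\<in>vars l. le_bot (\<sigma> x) (\<sigma>' x)" using match_lift[OF lin h(2) u'(2)] by blast
  have "\<forall>x\<in>vars r. le_bot (\<sigma> x) (\<sigma>' x)" using s'(2) vr by blast
  from inst_lift[OF h(3) this] have v': "inst \<sigma>' r (sbst \<sigma>' (Inl r))" "le_bot v (sbst \<sigma>' (Inl r))" by auto
  have "rstep R t' \<pi> (repl t' \<pi> (sbst \<sigma>' (Inl r)))"
    unfolding rstep_def using lr u'(1) s'(1) v'(1) by blast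
  moreover have "le_bot t1 (repl t' \<pi> (sbst \<sigma>' (Inl r)))"
    unfolding h(4) by (rule repl_mono) (use h(1) le v'(2) in auto)
  ultimately show ?thesis by blast
qed

lemma idx0_le: "idx0 \<le> (i::'i::wellorder)"
  unfolding idx0_def by (rule Least_le) simp

lemma isucc_gt: "(i::'i::wellorder) < k \<Longrightarrow> i < isucc i"
  unfolding isucc_def by (rule LeastI) 

lemma isucc_le: "(i::'i::wellorder) < k \<Longrightarrow> isucc i \<le> k"
  unfolding isucc_def by (rule Least_le)

lemma isucc_inj: "(j::'i::wellorder) < i \<Longrightarrow> j' < i \<Longrightarrow> isucc j = i \<Longrightarrow> isucc j' = i \<Longrightarrow> j = j'"
proof (rule ccontr)
  assume a: "j < i" "j' < i" "isucc j = i" "isucc j' = i" "j \<noteq> j'"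
  show False
  proof (cases "j < j'")
    case True
    then have "isucc j \<le> j'" by (rule isucc_le)
    then show False using a by simp
  next
    case False
    then have "j' < j" using a(5) by simp
    then have "isucc j' \<le> j" by (rule isucc_le)
    then show False using a by simp
  qed
qed

lemma ord_cases:
  fixes i :: "'i::wellorder"
  obtains "i = idx0" | "is_limit i" | j where "j < i" "i = isucc j"
proof -
  consider "i = idx0" | "is_limit i" | "i \<noteq> idx0" "\<not> is_limit i" by blast
  then show ?thesis
  proof cases
    case 3
    then obtain b where b: "b < i" "\<not> (\<exists>c. b < c \<and> c < i)" unfolding is_limit_def by blast
    have "isucc b \<le> i" using b(1) by (rule isucc_le)
    moreover have "b < isucc b" using b(1) by (rule isucc_gt)
    ultimately have "isucc b = i" using b(2) by (metis order_le_less)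
    then show ?thesis using that b(1) by blast
  qed (use that in auto)
qed

lemma limit_not_succ: "is_limit (i::'i::wellorder) \<Longrightarrow> j < i \<Longrightarrow> i \<noteq> isucc j"
proof
  assume a: "is_limit i" "j < i" "i = isucc j"
  then obtain c where "j < c" "c < i" unfolding is_limit_def by blast
  moreover have "isucc j \<le> c" using \<open>j < c\<close> by (rule isucc_le)
  ultimately show False using a(3) by simp
qed

lemma liminf_cong:
  fixes a b :: "'i::wellorder \<Rightarrow> ('f, 'v) pterm"
  assumes "\<And>i. i < l \<Longrightarrow> a i = b i"
  shows "liminf_at a l = liminf_at b l"
proof -
  have "\<And>c. {a i | i. c \<le> i \<and> i < l} = {b i | i. c \<le> i \<and> i < l}"
    using assms by (intro Collect_cong) (metis)
  then show ?thesis unfolding liminf_at_def by simp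
qed

theorem proposition3p7:
  fixes R :: "(('f, 'v) pterm \<times> ('f, 'v) pterm) set" and s t :: "('f, 'v) pterm"
  assumes "trs R" and "left_linear R"
    and "strongly_p_converges R TYPE('i::wellorder) s t"
  shows "\<exists>t'. le_bot t t' \<and> weakly_p_converges R TYPE('i) s t'"
proof -
  from assms(3) obtain \<alpha> :: 'i and ts ps where red: "reduction R \<alpha> ts ps" and s0: "ts idx0 = s"
    and sc: "strong_conv \<alpha> ts ps t" unfolding strongly_p_converges_def by blast
  define c where "c i = repl (ts i) (ps i) PBot" for i
  define Rel where "Rel = {(x::'i, y). x < y}"
  define F where "F g i = (if i = idx0 then s else if \<exists>j<i. i = isucc j
     then (SOME x. rstep R (g (THE j. j < i \<and> i = isucc j)) (ps (THE j. j < i \<and> i = isucc j)) x \<and> le_bot (ts i) x)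
     else liminf_at g i)" for g :: "'i \<Rightarrow> ('f, 'v) pterm" and i
  define T where "T = wfrec Rel F"
  have wf: "wf Rel" unfolding Rel_def by (rule wellorder_class.wf)
  have the_pred: "(THE j. j < i \<and> i = isucc j) = j" if "j < i" "i = isucc j" for i j :: 'i
    using that isucc_inj by (intro the_equality) auto
  have T0: "T idx0 = s"
    unfolding T_def by (subst wfrec[OF wf]) (simp add: F_def)
  have Tsuc: "T i = (SOME x. rstep R (T j) (ps j) x \<and> le_bot (ts i) x)" if ji: "j < i" "i = isucc j" for i j
  proof -
    have ne: "i \<noteq> idx0" using idx0_le[of j] ji by auto
    have cj: "cut T Rel i j = T j" using ji(1) unfolding Rel_def by (simp add: cut_apply)
    show ?thesis unfolding T_def
      by (subst wfrec[OF wf]) (use ne ji the_pred[OF ji] cj in \<open>auto simp: F_def T_def\<close>)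
  qed
  have Tlim: "T i = liminf_at T i" if l: "is_limit i" for i
  proof -
    have ne: "i \<noteq> idx0" using l unfolding is_limit_def by blast
    have ns: "\<not> (\<exists>j<i. i = isucc j)" using limit_not_succ[OF l] by blast
    have "liminf_at (cut T Rel i) i = liminf_at T i"
      by (rule liminf_cong) (simp add: cut_apply Rel_def)
    then show ?thesis unfolding T_def
      by (subst wfrec[OF wf]) (use ne ns in \<open>auto simp add: F_def T_def\<close>)
  qed
  have c_le: "le_bot (c i) (ts i)" for i unfolding c_def by (rule repl_bot_le)
  have sc_lim: "liminf_at c l = ts l" if "l < \<alpha>" "is_limit l" for l
    using sc that unfolding strong_conv_def c_def by blast
  have inv: "le_bot (ts i) (T i)" if "i < \<alpha> \<or> (i = \<alpha> \<and> \<not> is_limit \<alpha>)" for i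
    using that
  proof (induction i rule: less_induct)
    case (less i)
    show ?case
    proof (cases i rule: ord_cases)
      case 1 then show ?thesis using s0 T0 le_bot_refl by simp
    next
      case 2
      then have ia: "i < \<alpha>" using less.prems by auto
      have "le_bot (c k) (T k)" if "k < i" for k
      proof -
        have "k < \<alpha>" using that ia by simp
        then have "le_bot (ts k) (T k)" using less.IH[OF that] by blast
        then show ?thesis using c_le le_bot_trans by blast
      qed
      then have "le_bot (liminf_at c i) (liminf_at T i)" by (rule liminf_mono)
      then show ?thesis using sc_lim[OF ia 2] Tlim[OF 2] by simp
    next
      case (3 j)
      have ja: "j < \<alpha>" using 3 less.prems by auto
      have IH: "le_bot (ts j) (T j)" using less.IH[OF 3(1)] ja by blast
      have st: "rstep R (ts j) (ps j) (ts i)" using red ja 3(2) unfolding reduction_def by simp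
      have "\<exists>x. rstep R (T j) (ps j) x \<and> le_bot (ts i) x" using rstep_lift[OF assms(1,2) st IH] .
      from someI_ex[OF this] show ?thesis using Tsuc[OF 3] by simp
    qed
  qed
  define t' where "t' = (if is_limit \<alpha> then liminf_at T \<alpha> else T \<alpha>)"
  have "reduction R \<alpha> T ps"
    unfolding reduction_def
  proof (intro allI impI)
    fix i assume i: "i < \<alpha>"
    have gt: "i < isucc i" using i by (rule isucc_gt)
    have st: "rstep R (ts i) (ps i) (ts (isucc i))" using red i unfolding reduction_def by simp
    have "\<exists>x. rstep R (T i) (ps i) x \<and> le_bot (ts (isucc i)) x" using rstep_lift[OF assms(1,2) st inv] i by simp
    from someI_ex[OF this] show "rstep R (T i) (ps i) (T (isucc i))" using Tsuc[OF gt refl] by simp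
  qed
  moreover have "weak_conv \<alpha> T t'"
    unfolding weak_conv_def t'_def using Tlim by simp
  moreover have "le_bot t t'"
  proof (cases "is_limit \<alpha>")
    case True
    have "le_bot (c k) (T k)" if "k < \<alpha>" for k
      using inv[of k] that c_le le_bot_trans by blast
    then have "le_bot (liminf_at c \<alpha>) (liminf_at T \<alpha>)" by (rule liminf_mono)
    moreover have "t = liminf_at c \<alpha>" using sc True unfolding strong_conv_def c_def by simp
    ultimately show ?thesis using True unfolding t'_def by simp
  next
    case False
    then have "t = ts \<alpha>" using sc unfolding strong_conv_def by simp
    then show ?thesis using inv[of \<alpha>] False unfolding t'_def by simp
  qed
  ultimately show ?thesis unfolding weakly_p_converges_def using T0 by blast
qed

end
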